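(* Let a stabilizer code $H$ be phantom with respect to the logical basis $(Q_X,Q_Z)$. Then for every weight vector $\mathbf w\in\mathbb Z_{\ge0}^3$, the number $\#\{v\in cQ_X+\mathrm{rs}(H):\ \mathbf w(v)=\mathbf w\}$ is the same for all $c\in\mathbb F_2^k\setminus\{0\}$. The same holds with $Q_X$ replaced by $Q_Z$.
   Context: Conventions: arithmetic over $\mathbb F_2$; vectors are row vectors; $\mathrm{rs}(M)$ is the row space of $M$; $E_{ab}\in\mathbb F_2^{k\times k}$ is the matrix unit with a single $1$ in position $(a,b)$; $A^{-T}=(A^{-1})^T$; $\Omega=\begin{pmatrix}0&I_n\\ I_n&0\end{pmatrix}$. A stabilizer code on $n$ qubits is given by a full-row-rank $H\in\mathbb F_2^{r\times 2n}$ with $H\Omega H^T=0$; $k=n-r$. A vector $(x|z)\in\mathbb F_2^{2n}$ represents the Pauli operator $\prod_iX_i^{x_i}Z_i^{z_i}$ up to phase. A logical basis is a pair $Q_X,Q_Z\in\mathbb F_2^{k\times 2n}$ with $H\Omega Q_X^T=0$, $H\Omega Q_Z^T=0$, $Q_X\Omega Q_X^T=0$, $Q_Z\Omega Q_Z^T=0$, $Q_X\Omega Q_Z^T=I_k$. A qubit permutation $\pi\in S_n$ with permutation matrix $P$ acts by $(x|z)\mapsto(xP|zP)$, i.e. right multiplication by $P\oplus P=\mathrm{diag}(P,P)$. For $A\in GL(k,\mathbb F_2)$, $\pi$ implements the logical CNOT circuit $A$ in the basis $(Q_X,Q_Z)$ if $\mathrm{rs}(H(P\oplus P))=\mathrm{rs}(H)$,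 every row of $Q_X(P\oplus P)-AQ_X$ lies in $\mathrm{rs}(H)$, and every row of $Q_Z(P\oplus P)-A^{-T}Q_Z$ lies in $\mathrm{rs}(H)$. The logical $\mathrm{CNOT}_{ab}$ ($a\neq b$) corresponds to $A=I_k+E_{ab}$. The stabilizer code is phantom with respect to $(Q_X,Q_Z)$ if for every ordered pair $(a,b)\in[k]^2$ with $a\ne b$ some permutation implements $I_k+E_{ab}$ in that basis; it is phantom if it is phantom with respect to some logical basis. The weight vector of $v=(x|z)$ is $\mathbf w(v)=(w_X,w_Z,w_Y)$ with $w_X=\#\{i:x_i=1,z_i=0\}$, $w_Z=\#\{i:x_i=0,z_i=1\}$, $w_Y=\#\{i:x_i=z_i=1\}$. *)

theory Defs
  imports "Jordan_Normal_Form.Matrix" "HOL-Library.Z2" "HOL-Combinatorics.Permutations"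
begin

(* Arithmetic over F_2 = type bit.  A JNF vector "'a vec" plays the role of a row vector:
   the row vector x M (for x of dimension dim_row M) is  transpose_mat M *\<^sub>v x. *)

definition Omega :: "nat \<Rightarrow> bit mat" where
  "Omega n = four_block_mat (0\<^sub>m n n) (1\<^sub>m n) (1\<^sub>m n) (0\<^sub>m n n)"

definition rs :: "bit mat \<Rightarrow> bit vec set" where
  "rs M = {v. \<exists>c. dim_vec c = dim_row M \<and> v = transpose_mat M *\<^sub>v c}"

definition full_row_rank :: "bit mat \<Rightarrow> bool" where
  "full_row_rank M \<longleftrightarrow>
     (\<forall>c. dim_vec c = dim_row M \<longrightarrow> transpose_mat M *\<^sub>v c = 0\<^sub>v (dim_col M) \<longrightarrow> c = 0\<^sub>v (dim_row M))"

definition stabilizer_code :: "nat \<Rightarrow> bit mat \<Rightarrow> bool" where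
  "stabilizer_code n H \<longleftrightarrow> dim_col H = 2 * n \<and> full_row_rank H \<and>
     H * Omega n * transpose_mat H = 0\<^sub>m (dim_row H) (dim_row H)"

definition num_logical :: "nat \<Rightarrow> bit mat \<Rightarrow> nat" where
  "num_logical n H = n - dim_row H"

definition logical_basis :: "nat \<Rightarrow> bit mat \<Rightarrow> bit mat \<Rightarrow> bit mat \<Rightarrow> bool" where
  "logical_basis n H QX QZ \<longleftrightarrow>
     (let k = num_logical n H in
      QX \<in> carrier_mat k (2 * n) \<and> QZ \<in> carrier_mat k (2 * n) \<and>
      H * Omega n * transpose_mat QX = 0\<^sub>m (dim_row H) k \<and>
      H * Omega n * transpose_mat QZ = 0\<^sub>m (dim_row H) k \<and>
      QX * Omega n * transpose_mat QX = 0\<^sub>m k k \<and>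
      QZ * Omega n * transpose_mat QZ = 0\<^sub>m k k \<and>
      QX * Omega n * transpose_mat QZ = 1\<^sub>m k)"

definition perm_mat :: "nat \<Rightarrow> (nat \<Rightarrow> nat) \<Rightarrow> bit mat" where
  "perm_mat n \<pi> = mat n n (\<lambda>(i, j). if \<pi> i = j then 1 else 0)"

definition dsum :: "bit mat \<Rightarrow> bit mat" where
  "dsum P = four_block_mat P (0\<^sub>m (dim_row P) (dim_col P)) (0\<^sub>m (dim_row P) (dim_col P)) P"

definition unit_mat :: "nat \<Rightarrow> nat \<Rightarrow> nat \<Rightarrow> bit mat" where
  "unit_mat k a b = mat k k (\<lambda>(i, j). if i = a \<and> j = b then 1 else 0)"

(* permutation matrix P implements logical CNOT circuit A (in GL(k,F_2)) in basis (QX,QZ);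
   A^{-T} is the transpose of the (unique) inverse B of A *)
definition implements ::
  "nat \<Rightarrow> bit mat \<Rightarrow> bit mat \<Rightarrow> bit mat \<Rightarrow> bit mat \<Rightarrow> bit mat \<Rightarrow> bool" where
  "implements n H QX QZ P A \<longleftrightarrow>
     (let k = num_logical n H in
      A \<in> carrier_mat k k \<and>
      rs (H * dsum P) = rs H \<and>
      (\<forall>i<k. row (QX * dsum P - A * QX) i \<in> rs H) \<and>
      (\<exists>B. B \<in> carrier_mat k k \<and> A * B = 1\<^sub>m k \<and> B * A = 1\<^sub>m k \<and>
           (\<forall>i<k. row (QZ * dsum P - transpose_mat B * QZ) i \<in> rs H)))"

definition phantom_wrt :: "nat \<Rightarrow> bit mat \<Rightarrow> bit mat \<Rightarrow> bit mat \<Rightarrow> bool" where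
  "phantom_wrt n H QX QZ \<longleftrightarrow>
     (let k = num_logical n H in
      \<forall>a<k. \<forall>b<k. a \<noteq> b \<longrightarrow>
        (\<exists>\<pi>. \<pi> permutes {..<n} \<and>
              implements n H QX QZ (perm_mat n \<pi>) (1\<^sub>m k + unit_mat k a b)))"

(* weight vector (w_X, w_Z, w_Y) of v = (x|z) \<in> F_2^{2n} *)
definition weight_vec :: "nat \<Rightarrow> bit vec \<Rightarrow> nat \<times> nat \<times> nat" where
  "weight_vec n v =
     (card {i. i < n \<and> v $ i = 1 \<and> v $ (n + i) = 0},
      card {i. i < n \<and> v $ i = 0 \<and> v $ (n + i) = 1},
      card {i. i < n \<and> v $ i = 1 \<and> v $ (n + i) = 1})"

definition coset :: "bit mat \<Rightarrow> bit mat \<Rightarrow> bit vec \<Rightarrow> bit vec set" where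
  "coset Q H c = {v. \<exists>s\<in>rs H. v = transpose_mat Q *\<^sub>v c + s}"

end

theory Submission
  imports Defs
begin


lemma bit_UNIV: "(UNIV :: bit set) = {0,1}"
  using bit.exhaust by auto

lemma finite_bit_vecs: "finite {v :: bit vec. dim_vec v = m}"
proof -
  have "{v :: bit vec. dim_vec v = m} \<subseteq> vec_of_list ` {xs. set xs \<subseteq> UNIV \<and> length xs = m}"
  proof
    fix v :: "bit vec" assume "v \<in> {v. dim_vec v = m}"
    then show "v \<in> vec_of_list ` {xs. set xs \<subseteq> UNIV \<and> length xs = m}"
      by (intro image_eqI[of _ _ "list_of_vec v"]) (auto simp: vec_list)
  qed
  moreover have "finite {xs. set xs \<subseteq> (UNIV::bit set) \<and> length xs = m}"
    by (rule finite_lists_length_eq) (simp add: bit_UNIV)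
  ultimately show ?thesis by (meson finite_imageI finite_subset)
qed

lemma dsum_entry:
  assumes "P \<in> carrier_mat n n" "i < 2*n" "j < 2*n"
  shows "dsum P $$ (j,i) = (if j < n \<and> i < n then P $$ (j,i) else if n \<le> j \<and> n \<le> i then P $$ (j-n,i-n) else 0)"
  using assms unfolding dsum_def by auto

lemma perm_action:
  assumes p: "pp permutes {..<n}" and v: "dim_vec v = 2*n"
  shows "transpose_mat (dsum (perm_mat n pp)) *\<^sub>v v =
    vec (2*n) (\<lambda>i. if i < n then v $ (Hilbert_Choice.inv pp i) else v $ (n + Hilbert_Choice.inv pp (i - n)))"
proof (rule eq_vecI)
  have dimP: "perm_mat n pp \<in> carrier_mat n n" unfolding perm_mat_def by auto
  have dimD: "dsum (perm_mat n pp) \<in> carrier_mat (2*n) (2*n)" unfolding dsum_def using dimP by auto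
  show "dim_vec (transpose_mat (dsum (perm_mat n pp)) *\<^sub>v v) = dim_vec (vec (2*n) (\<lambda>i. if i < n then v $ (Hilbert_Choice.inv pp i) else v $ (n + Hilbert_Choice.inv pp (i - n))))"
    using dimD by simp
  fix i assume "i < dim_vec (vec (2*n) (\<lambda>i. if i < n then v $ (Hilbert_Choice.inv pp i) else v $ (n + Hilbert_Choice.inv pp (i - n))))"
  then have i: "i < 2*n" by simp
  have inv_lt: "Hilbert_Choice.inv pp x < n" if "x < n" for x
    using p that by (meson lessThan_iff permutes_inv permutes_in_image)
  have eq: "pp j = x \<longleftrightarrow> j = Hilbert_Choice.inv pp x" for j x
    using permutes_inv_eq[OF p] by metis
  have "(transpose_mat (dsum (perm_mat n pp)) *\<^sub>v v) $ i = (\<Sum>j<2*n. dsum (perm_mat n pp) $$ (j,i) * v $ j)"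
    using dimD i v by (simp add: scalar_prod_def lessThan_atLeast0)
  also have "\<dots> = (\<Sum>j<2*n. if j = (if i < n then Hilbert_Choice.inv pp i else n + Hilbert_Choice.inv pp (i - n)) then v $ j else 0)"
  proof (rule sum.cong[OF refl])
    fix j assume j: "j \<in> {..<2*n}"
    show "dsum (perm_mat n pp) $$ (j,i) * v $ j = (if j = (if i < n then Hilbert_Choice.inv pp i else n + Hilbert_Choice.inv pp (i - n)) then v $ j else 0)"
    proof -
      have j2: "j < 2*n" using j by simp
      have pe: "perm_mat n pp $$ (a, b) = (if pp a = b then 1 else 0)" if "a < n" "b < n" for a b
        using that unfolding perm_mat_def by simp
      show ?thesis
      proof (cases "i < n")
        case True
        show ?thesis
        proof (cases "j < n")
          case True
          then show ?thesis using \<open>i < n\<close> dsum_entry[OF dimP i j2] pe[of j i] eq[of j i] by simp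
        next
          case False
          then show ?thesis using \<open>i < n\<close> dsum_entry[OF dimP i j2] inv_lt[of i] by auto
        qed
      next
        case False
        show ?thesis
        proof (cases "j < n")
          case True
          then show ?thesis using \<open>\<not> i < n\<close> dsum_entry[OF dimP i j2] by auto
        next
          case False
          have "j - n < n" "i - n < n" using i j2 False \<open>\<not> i < n\<close> by auto
          moreover have "(j - n = Hilbert_Choice.inv pp (i - n)) = (j = n + Hilbert_Choice.inv pp (i - n))"
            using False by auto
          ultimately show ?thesis using False \<open>\<not> i < n\<close> dsum_entry[OF dimP i j2] pe[of "j-n" "i-n"] eq[of "j-n" "i-n"]
            by simp
        qed
      qed
    qed
  qed
  also have "\<dots> = (if i < n then v $ (Hilbert_Choice.inv pp i) else v $ (n + Hilbert_Choice.inv pp (i - n)))"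
  proof -
    have a: "Hilbert_Choice.inv pp x < 2*n" if "x < n" for x using inv_lt[OF that] by simp
    have b: "n + Hilbert_Choice.inv pp (i - n) < 2*n" if "\<not> i < n" using inv_lt[of "i-n"] that i by simp
    show ?thesis using i a b by (simp add: sum.delta)
  qed
  finally show "(transpose_mat (dsum (perm_mat n pp)) *\<^sub>v v) $ i = vec (2*n) (\<lambda>i. if i < n then v $ (Hilbert_Choice.inv pp i) else v $ (n + Hilbert_Choice.inv pp (i - n))) $ i"
    using i by simp
qed

lemma card_perm_pred:
  assumes p: "sg permutes {..<n}"
  shows "card {i. i < n \<and> Q (sg i)} = card {i. i < n \<and> Q i}"
proof -
  have pi: "Hilbert_Choice.inv sg permutes {..<n}" using p by (rule permutes_inv)
  have inS: "sg x < n \<longleftrightarrow> x < n" for x using permutes_in_image[OF p, of x] by simp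
  have inS2: "Hilbert_Choice.inv sg x < n \<longleftrightarrow> x < n" for x using permutes_in_image[OF pi, of x] by simp
  have ss: "sg (Hilbert_Choice.inv sg x) = x" for x using permutes_inverses(1)[OF p] .
  have img: "sg ` {i. i < n \<and> Q (sg i)} = {i. i < n \<and> Q i}"
  proof
    show "sg ` {i. i < n \<and> Q (sg i)} \<subseteq> {i. i < n \<and> Q i}" using inS by auto
    show "{i. i < n \<and> Q i} \<subseteq> sg ` {i. i < n \<and> Q (sg i)}"
    proof
      fix x assume x: "x \<in> {i. i < n \<and> Q i}"
      have m: "Hilbert_Choice.inv sg x \<in> {i. i < n \<and> Q (sg i)}" using x inS2 ss by simp
      show "x \<in> sg ` {i. i < n \<and> Q (sg i)}" by (rule image_eqI[where f=sg, OF ss[of x, symmetric] m])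
    qed
  qed
  have inj: "inj_on sg {i. i < n \<and> Q (sg i)}" using permutes_inj[OF p] by (rule inj_on_subset) simp
  show ?thesis using card_image[OF inj] img by simp
qed
lemma weight_perm:
  assumes p: "pp permutes {..<n}" and v: "dim_vec v = 2*n"
  shows "weight_vec n (vec (2*n) (\<lambda>i. if i < n then v $ (Hilbert_Choice.inv pp i) else v $ (n + Hilbert_Choice.inv pp (i - n)))) = weight_vec n v"
proof -
  define w where "w = vec (2*n) (\<lambda>i. if i < n then v $ (Hilbert_Choice.inv pp i) else v $ (n + Hilbert_Choice.inv pp (i - n)))"
  have pi: "Hilbert_Choice.inv pp permutes {..<n}" using p by (rule permutes_inv)
  have e1: "w $ i = v $ Hilbert_Choice.inv pp i" if "i < n" for i using that unfolding w_def by simp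
  have e2: "w $ (n+i) = v $ (n + Hilbert_Choice.inv pp i)" if "i < n" for i using that unfolding w_def by simp
  have S: "{i. i < n \<and> w $ i = a \<and> w $ (n+i) = b}
      = {i. i < n \<and> (\<lambda>j. v $ j = a \<and> v $ (n+j) = b) (Hilbert_Choice.inv pp i)}" for a b
  proof (rule Collect_cong)
    fix i show "(i < n \<and> w $ i = a \<and> w $ (n+i) = b) = (i < n \<and> (\<lambda>j. v $ j = a \<and> v $ (n+j) = b) (Hilbert_Choice.inv pp i))"
      using e1[of i] e2[of i] by auto
  qed
  have C: "card {i. i < n \<and> w $ i = a \<and> w $ (n+i) = b} = card {i. i < n \<and> v $ i = a \<and> v $ (n+i) = b}" for a b
    unfolding S by (rule card_perm_pred[OF pi])
  have "weight_vec n w = weight_vec n v" unfolding weight_vec_def C ..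
  then show ?thesis unfolding w_def .
qed

lemma rs_comb:
  assumes M: "M \<in> carrier_mat k m" and H: "dim_col H = m"
    and rows: "\<forall>i<k. row M i \<in> rs H" and c: "dim_vec c = k"
  shows "transpose_mat M *\<^sub>v c \<in> rs H"
proof -
  let ?r = "dim_row H"
  have "\<forall>i. \<exists>d. i < k \<longrightarrow> dim_vec d = ?r \<and> row M i = transpose_mat H *\<^sub>v d"
    using rows unfolding rs_def by auto
  then obtain d where d: "\<And>i. i < k \<Longrightarrow> dim_vec (d i) = ?r \<and> row M i = transpose_mat H *\<^sub>v d i"
    by metis
  define D where "D = mat k ?r (\<lambda>(i,j). d i $ j)"
  have Dc: "D \<in> carrier_mat k ?r" unfolding D_def by simp
  have Hc: "H \<in> carrier_mat ?r m" using H by auto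
  have rowD: "row D i = d i" if "i < k" for i
    using d[OF that] that unfolding D_def by (intro eq_vecI) auto
  have MD: "M = D * H"
  proof (rule eq_matI)
    show "dim_row M = dim_row (D * H)" "dim_col M = dim_col (D * H)" using M Dc H by auto
    fix i j assume i: "i < dim_row (D * H)" and j: "j < dim_col (D * H)"
    have ik: "i < k" and jm: "j < m" using i j Dc H by auto
    have "M $$ (i,j) = row M i $ j" using ik jm M by auto
    also have "\<dots> = (transpose_mat H *\<^sub>v d i) $ j" using d[OF ik] by simp
    also have "\<dots> = col H j \<bullet> d i" using jm H by simp
    also have "\<dots> = d i \<bullet> col H j"
    proof (rule comm_scalar_prod[of _ ?r])
      show "col H j \<in> carrier_vec ?r" by (rule carrier_vecI) simp
      show "d i \<in> carrier_vec ?r" by (rule carrier_vecI) (use d[OF ik] in blast)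
    qed
    also have "\<dots> = (D * H) $$ (i,j)" using ik jm Dc H rowD[OF ik] by simp
    finally show "M $$ (i,j) = (D * H) $$ (i,j)" .
  qed
  have "transpose_mat M *\<^sub>v c = (transpose_mat H * transpose_mat D) *\<^sub>v c"
    unfolding MD transpose_mult[OF Dc Hc] ..
  also have "\<dots> = transpose_mat H *\<^sub>v (transpose_mat D *\<^sub>v c)"
  proof (rule assoc_mult_mat_vec[of _ m ?r _ k])
    show "transpose_mat H \<in> carrier_mat m ?r" using H unfolding carrier_mat_def by simp
    show "transpose_mat D \<in> carrier_mat ?r k" unfolding D_def carrier_mat_def by simp
    show "c \<in> carrier_vec k" using c by (rule carrier_vecI)
  qed
  finally have eq: "transpose_mat M *\<^sub>v c = transpose_mat H *\<^sub>v (transpose_mat D *\<^sub>v c)" .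
  have "dim_vec (transpose_mat D *\<^sub>v c) = dim_row H" using Dc by simp
  then show ?thesis unfolding rs_def using eq by blast
qed

lemma rs_add:
  assumes "x \<in> rs H" "y \<in> rs H" shows "x + y \<in> rs H"
proof -
  obtain a b where a: "dim_vec a = dim_row H" "x = transpose_mat H *\<^sub>v a"
    and b: "dim_vec b = dim_row H" "y = transpose_mat H *\<^sub>v b" using assms unfolding rs_def by auto
  have "x + y = transpose_mat H *\<^sub>v (a + b)"
  proof -
    have Hc: "transpose_mat H \<in> carrier_mat (dim_col H) (dim_row H)" unfolding carrier_mat_def by simp
    have ac: "a \<in> carrier_vec (dim_row H)" using a(1) by (rule carrier_vecI)
    have bc: "b \<in> carrier_vec (dim_row H)" using b(1) by (rule carrier_vecI)
    show ?thesis unfolding a(2) b(2) by (rule mult_add_distrib_mat_vec[OF Hc ac bc, symmetric])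
  qed
  moreover have "dim_vec (a + b) = dim_row H" using b by simp
  ultimately show ?thesis unfolding rs_def by blast
qed

lemma rs_dim: "x \<in> rs H \<Longrightarrow> dim_vec x = dim_col H"
  unfolding rs_def by auto

lemma rs_mult:
  assumes s: "s \<in> rs H" and D: "D \<in> carrier_mat (dim_col H) m"
  shows "transpose_mat D *\<^sub>v s \<in> rs (H * D)"
proof -
  obtain a where a: "dim_vec a = dim_row H" "s = transpose_mat H *\<^sub>v a" using s unfolding rs_def by auto
  have "transpose_mat D *\<^sub>v s = (transpose_mat D * transpose_mat H) *\<^sub>v a"
  proof -
    have Hc: "transpose_mat H \<in> carrier_mat (dim_col H) (dim_row H)" unfolding carrier_mat_def by simp
    have Dc: "transpose_mat D \<in> carrier_mat m (dim_col H)" using D unfolding carrier_mat_def by simp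
    have ac: "a \<in> carrier_vec (dim_row H)" using a(1) by (rule carrier_vecI)
    show ?thesis unfolding a(2) by (rule assoc_mult_mat_vec[OF Dc Hc ac, symmetric])
  qed
  also have "\<dots> = transpose_mat (H * D) *\<^sub>v a"
  proof -
    have Hc: "H \<in> carrier_mat (dim_row H) (dim_col H)" by auto
    show ?thesis by (simp only: transpose_mult[OF Hc D])
  qed
  finally have eq: "transpose_mat D *\<^sub>v s = transpose_mat (H * D) *\<^sub>v a" .
  have "dim_vec a = dim_row (H * D)" using a by simp
  then show ?thesis unfolding rs_def using eq by blast
qed

lemma ab_aux: "(x::'a::ab_group_add) + t = y + ((x - y) + t)"
  by (simp add: algebra_simps)

lemma dsum_carrier: "perm_mat n pp \<in> carrier_mat n n"
  "dsum (perm_mat n pp) \<in> carrier_mat (2*n) (2*n)"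
proof -
  show P: "perm_mat n pp \<in> carrier_mat n n" unfolding perm_mat_def by auto
  show "dsum (perm_mat n pp) \<in> carrier_mat (2*n) (2*n)" unfolding dsum_def mult_2
    using P by (intro four_block_carrier_mat) auto
qed

lemma perm_inj:
  assumes p: "pp permutes {..<n}" and u: "dim_vec u = 2*n" and v: "dim_vec v = 2*n"
    and eq: "transpose_mat (dsum (perm_mat n pp)) *\<^sub>v u = transpose_mat (dsum (perm_mat n pp)) *\<^sub>v v"
  shows "u = v"
proof -
  let ?g = "\<lambda>v::bit vec. vec (2*n) (\<lambda>i. if i < n then v $ (Hilbert_Choice.inv pp i) else v $ (n + Hilbert_Choice.inv pp (i - n)))"
  have e: "?g u = ?g v" using eq unfolding perm_action[OF p u] perm_action[OF p v] .
  have ppl: "pp x < n" if "x < n" for x using permutes_in_image[OF p, of x] that by simp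
  have ipp: "Hilbert_Choice.inv pp (pp x) = x" for x using permutes_inverses(2)[OF p] .
  show ?thesis
  proof (rule eq_vecI)
    show "dim_vec u = dim_vec v" using u v by simp
    fix j assume "j < dim_vec v"
    then have j: "j < 2*n" using v by simp
    show "u $ j = v $ j"
    proof (cases "j < n")
      case True
      have "?g u $ (pp j) = ?g v $ (pp j)" using e by (rule arg_cong[where f="\<lambda>w. w $ (pp j)"])
      moreover have "pp j < n" using ppl True .
      ultimately show ?thesis using ipp[of j] by simp
    next
      case False
      have l: "pp (j - n) < n" using ppl[of "j-n"] False j by simp
      have "?g u $ (n + pp (j - n)) = ?g v $ (n + pp (j - n))" using e by (rule arg_cong[where f="\<lambda>w. w $ (n + pp (j - n))"])
      then show ?thesis using ipp[of "j-n"] l False by simp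
    qed
  qed
qed

lemma coset_step:
  assumes H: "dim_col H = 2*n" and Q: "Q \<in> carrier_mat k (2*n)" and p: "pp permutes {..<n}"
   and rsP: "rs (H * dsum (perm_mat n pp)) = rs H"
   and A: "A \<in> carrier_mat k k"
   and rows: "\<forall>i<k. row (Q * dsum (perm_mat n pp) - A * Q) i \<in> rs H"
   and c: "dim_vec c = k"
  shows "card {v \<in> coset Q H c. weight_vec n v = w}
       \<le> card {v \<in> coset Q H (transpose_mat A *\<^sub>v c). weight_vec n v = w}"
proof -
  let ?D = "dsum (perm_mat n pp)"
  define f where "f v = transpose_mat ?D *\<^sub>v v" for v
  have Dc: "?D \<in> carrier_mat (2*n) (2*n)" by (rule dsum_carrier)
  have cc: "c \<in> carrier_vec k" using c by (rule carrier_vecI)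
  have dimQc: "dim_vec (transpose_mat Q *\<^sub>v c) = 2*n" using Q by simp
  have cos_dim: "dim_vec v = 2*n" if vin: "v \<in> coset Q H c'" for v c'
  proof -
    obtain s where s: "s \<in> rs H" and vs: "v = transpose_mat Q *\<^sub>v c' + s" using vin unfolding coset_def by blast
    have "dim_vec v = dim_vec s" unfolding vs by simp
    then show ?thesis using rs_dim[OF s] H by simp
  qed
  let ?S = "{v \<in> coset Q H c. weight_vec n v = w}"
  let ?T = "{v \<in> coset Q H (transpose_mat A *\<^sub>v c). weight_vec n v = w}"
  have inj: "inj_on f ?S"
  proof (rule inj_onI)
    fix u v assume u: "u \<in> ?S" and v: "v \<in> ?S" and e: "f u = f v"
    have du: "dim_vec u = 2*n" using u cos_dim[of u c] by simp
    have dv: "dim_vec v = 2*n" using v cos_dim[of v c] by simp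
    show "u = v" by (rule perm_inj[OF p du dv]) (use e in \<open>simp only: f_def\<close>)
  qed
  have fin: "finite ?T"
  proof (rule finite_subset[OF _ finite_bit_vecs[of "2*n"]])
    show "?T \<subseteq> {v. dim_vec v = 2*n}"
    proof
      fix v assume "v \<in> ?T" then show "v \<in> {v. dim_vec v = 2*n}" using cos_dim[of v "transpose_mat A *\<^sub>v c"] by simp
    qed
  qed
  have img: "f ` ?S \<subseteq> ?T"
  proof
    fix y assume "y \<in> f ` ?S"
    then obtain v where vS: "v \<in> ?S" and y: "y = f v" by blast
    then obtain s where s: "s \<in> rs H" and vs: "v = transpose_mat Q *\<^sub>v c + s" unfolding coset_def by blast
    have dv: "dim_vec v = 2*n" using vS cos_dim[of v c] by simp
    have ds: "dim_vec s = 2*n" using rs_dim[OF s] H by simp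
    have "weight_vec n (f v) = weight_vec n v" unfolding f_def perm_action[OF p dv] by (rule weight_perm[OF p dv])
    then have wt: "weight_vec n y = w" using vS y by simp
    define X where "X = transpose_mat (Q * ?D) *\<^sub>v c"
    define Y where "Y = transpose_mat Q *\<^sub>v (transpose_mat A *\<^sub>v c)"
    define Z where "Z = transpose_mat (Q * ?D - A * Q) *\<^sub>v c"
    define T where "T = transpose_mat ?D *\<^sub>v s"
    have QD: "Q * ?D \<in> carrier_mat k (2*n)" using Q Dc by simp
    have AQ: "A * Q \<in> carrier_mat k (2*n)" using A Q by simp
    have M: "Q * ?D - A * Q \<in> carrier_mat k (2*n)" using AQ by (rule minus_carrier_mat)
    have DTc: "transpose_mat ?D \<in> carrier_mat (2*n) (2*n)" using Dc unfolding carrier_mat_def by simp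
    have QTc: "transpose_mat Q \<in> carrier_mat (2*n) k" using Q unfolding carrier_mat_def by simp
    have ATc: "transpose_mat A \<in> carrier_mat k k" using A unfolding carrier_mat_def by simp
    have QDT: "transpose_mat (Q * ?D) \<in> carrier_mat (2*n) k" using QD unfolding carrier_mat_def by simp
    have AQT: "transpose_mat (A * Q) \<in> carrier_mat (2*n) k" using AQ unfolding carrier_mat_def by simp
    have Qcv: "transpose_mat Q *\<^sub>v c \<in> carrier_vec (2*n)" using dimQc by (rule carrier_vecI)
    have sc: "s \<in> carrier_vec (2*n)" using ds by (rule carrier_vecI)
    have fv: "f v = X + T"
    proof -
      have "f v = transpose_mat ?D *\<^sub>v (transpose_mat Q *\<^sub>v c) + T"
        unfolding f_def vs T_def
        by (rule mult_add_distrib_mat_vec[OF DTc Qcv sc])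
      also have "transpose_mat ?D *\<^sub>v (transpose_mat Q *\<^sub>v c) = (transpose_mat ?D * transpose_mat Q) *\<^sub>v c"
        by (rule assoc_mult_mat_vec[OF DTc QTc cc, symmetric])
      also have "transpose_mat ?D * transpose_mat Q = transpose_mat (Q * ?D)"
        by (rule transpose_mult[symmetric, OF Q Dc])
      finally show ?thesis unfolding X_def .
    qed
    have ZXY: "Z = X - Y"
    proof -
      have "Z = (transpose_mat (Q * ?D) - transpose_mat (A * Q)) *\<^sub>v c"
        unfolding Z_def by (simp only: transpose_minus[OF QD AQ])
      also have "\<dots> = transpose_mat (Q * ?D) *\<^sub>v c - transpose_mat (A * Q) *\<^sub>v c"
        by (rule minus_mult_distrib_mat_vec[OF QDT AQT cc])
      also have "transpose_mat (A * Q) *\<^sub>v c = Y"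
      proof -
        have "transpose_mat (A * Q) *\<^sub>v c = (transpose_mat Q * transpose_mat A) *\<^sub>v c"
          by (simp only: transpose_mult[OF A Q])
        also have "\<dots> = Y" unfolding Y_def
          by (rule assoc_mult_mat_vec[OF QTc ATc cc])
        finally show ?thesis .
      qed
      finally show ?thesis unfolding X_def .
    qed
    have DcD: "dim_col ?D = 2*n" using Dc by (rule carrier_matD)
    have QcD: "dim_col Q = 2*n" using Q by (rule carrier_matD)
    have dX: "dim_vec X = 2*n" unfolding X_def dim_mult_mat_vec index_transpose_mat index_mult_mat DcD ..
    have dY: "dim_vec Y = 2*n" unfolding Y_def dim_mult_mat_vec index_transpose_mat QcD ..
    have dT: "dim_vec T = 2*n" unfolding T_def dim_mult_mat_vec index_transpose_mat DcD ..
    have yeq: "y = Y + (Z + T)"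
      unfolding y fv ZXY
    proof (rule eq_vecI)
      show "dim_vec (X + T) = dim_vec (Y + (X - Y + T))" by simp
      fix i assume "i < dim_vec (Y + (X - Y + T))"
      then have i: "i < 2*n" using dT by simp
      have l: "(X + T) $ i = X $ i + T $ i" by (simp only: index_add_vec dT i)
      have r: "(Y + (X - Y + T)) $ i = Y $ i + ((X $ i - Y $ i) + T $ i)"
        by (simp only: index_add_vec index_minus_vec dX dY dT i)
      show "(X + T) $ i = (Y + (X - Y + T)) $ i" unfolding l r by (rule ab_aux)
    qed
    have Zin: "Z \<in> rs H" unfolding Z_def by (rule rs_comb[OF M H rows c])
    have T1: "T \<in> rs (H * ?D)" unfolding T_def by (rule rs_mult[OF s]) (use Dc H in simp)
    have Tin: "T \<in> rs H" using T1 unfolding rsP .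
    have "y \<in> coset Q H (transpose_mat A *\<^sub>v c)"
      unfolding coset_def mem_Collect_eq
    proof (rule bexI[of _ "Z + T"])
      show "y = transpose_mat Q *\<^sub>v (transpose_mat A *\<^sub>v c) + (Z + T)" using yeq unfolding Y_def .
      show "Z + T \<in> rs H" by (rule rs_add[OF Zin Tin])
    qed
    then show "y \<in> ?T" using wt by (intro CollectI conjI)
  qed
  show ?thesis using card_inj_on_le[OF inj img fin] .
qed



declare add_bit_eq_xor[simp del] mult_bit_eq_and[simp del]

lemma bit_add_self: "(x::bit) + x = 0"
  by (cases x) (simp_all add: add_bit_eq_xor)

lemma bit_add_cancel: "((p::bit) + q) + q = p"
  by (simp add: add.assoc bit_add_self)

definition tv :: "nat \<Rightarrow> nat \<Rightarrow> nat \<Rightarrow> bit vec \<Rightarrow> bit vec" where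
  "tv k x y c = vec k (\<lambda>j. if j = y then c $ j + c $ x else c $ j)"

lemma transv_entry:
  assumes "i < k" "j < k"
  shows "(1\<^sub>m k + unit_mat k a b) $$ (i,j) = (if i = j then 1 else 0) + (if i = a \<and> j = b then 1 else 0)"
  using assms unfolding unit_mat_def by simp

lemma sum_two_deltas:
  fixes c :: "bit vec"
  assumes j: "j < k" and a: "a < k"
  shows "(\<Sum>i\<in>{0..<k}. ((if i = j then 1 else 0) + (if i = a \<and> P then 1 else 0)) * c $ i)
         = c $ j + (if P then c $ a else 0)"
proof -
  have "(\<Sum>i\<in>{0..<k}. ((if i = j then 1 else 0) + (if i = a \<and> P then 1 else 0)) * c $ i)
      = (\<Sum>i\<in>{0..<k}. (if i = j then c $ i else 0) + (if P then (if i = a then c $ i else 0) else 0))"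
    by (rule sum.cong) (auto simp: distrib_right)
  also have "\<dots> = (\<Sum>i\<in>{0..<k}. (if i = j then c $ i else 0)) + (\<Sum>i\<in>{0..<k}. (if P then (if i = a then c $ i else 0) else 0))"
    by (rule sum.distrib)
  also have "\<dots> = c $ j + (if P then c $ a else 0)"
    using j a by (cases P) (simp_all add: sum.delta)
  finally show ?thesis .
qed

lemma tvT:
  assumes a: "a < k" and b: "b < k" and c: "dim_vec c = k"
  shows "transpose_mat (1\<^sub>m k + unit_mat k a b) *\<^sub>v c = tv k a b c"
proof (rule eq_vecI)
  show "dim_vec (transpose_mat (1\<^sub>m k + unit_mat k a b) *\<^sub>v c) = dim_vec (tv k a b c)"
    unfolding tv_def unit_mat_def by simp
  fix j assume "j < dim_vec (tv k a b c)"
  then have j: "j < k" unfolding tv_def by simp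
  have "(transpose_mat (1\<^sub>m k + unit_mat k a b) *\<^sub>v c) $ j
      = (\<Sum>i\<in>{0..<k}. (1\<^sub>m k + unit_mat k a b) $$ (i,j) * c $ i)"
    using j c unfolding unit_mat_def by (simp add: scalar_prod_def)
  also have "\<dots> = (\<Sum>i\<in>{0..<k}. ((if i = j then 1 else 0) + (if i = a \<and> j = b then 1 else 0)) * c $ i)"
    by (rule sum.cong) (use j in \<open>simp_all add: transv_entry\<close>)
  also have "\<dots> = c $ j + (if j = b then c $ a else 0)"
    by (rule sum_two_deltas[OF j a])
  also have "\<dots> = tv k a b c $ j" unfolding tv_def using j by simp
  finally show "(transpose_mat (1\<^sub>m k + unit_mat k a b) *\<^sub>v c) $ j = tv k a b c $ j" .
qed

lemma tvN:
  assumes a: "a < k" and b: "b < k" and ab: "a \<noteq> b" and c: "dim_vec c = k"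
  shows "(1\<^sub>m k + unit_mat k a b) *\<^sub>v c = tv k b a c"
proof (rule eq_vecI)
  show "dim_vec ((1\<^sub>m k + unit_mat k a b) *\<^sub>v c) = dim_vec (tv k b a c)"
    unfolding tv_def unit_mat_def by simp
  fix j assume "j < dim_vec (tv k b a c)"
  then have j: "j < k" unfolding tv_def by simp
  have "((1\<^sub>m k + unit_mat k a b) *\<^sub>v c) $ j
      = (\<Sum>i\<in>{0..<k}. ((if i = j then 1 else 0) + (if j = a \<and> i = b then 1 else 0)) * c $ i)"
    using j c unfolding unit_mat_def by (simp add: scalar_prod_def)
  also have "\<dots> = (\<Sum>i\<in>{0..<k}. ((if i = j then 1 else 0) + (if i = b \<and> j = a then 1 else 0)) * c $ i)"
    by (rule sum.cong) auto
  also have "\<dots> = c $ j + (if j = a then c $ b else 0)"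
    by (rule sum_two_deltas[OF j b])
  also have "\<dots> = tv k b a c $ j" unfolding tv_def using j by simp
  finally show "((1\<^sub>m k + unit_mat k a b) *\<^sub>v c) $ j = tv k b a c $ j" .
qed

lemma tv_dim: "dim_vec (tv k x y c) = k" unfolding tv_def by simp

lemma tv_inv:
  assumes xy: "x \<noteq> y" and c: "dim_vec c = k" and xk: "x < k"
  shows "tv k x y (tv k x y c) = c"
proof (rule eq_vecI)
  show "dim_vec (tv k x y (tv k x y c)) = dim_vec c" using c by (simp add: tv_dim)
  fix j assume "j < dim_vec c"
  then have j: "j < k" using c by simp
  have inner: "tv k x y c $ x = c $ x" unfolding tv_def using xk xy by simp
  show "tv k x y (tv k x y c) $ j = c $ j"
  proof (cases "j = y")
    case True
    have "tv k x y (tv k x y c) $ j = tv k x y c $ j + tv k x y c $ x" unfolding tv_def using j True by simp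
    also have "\<dots> = (c $ j + c $ x) + c $ x" unfolding inner unfolding tv_def using j True by simp
    finally show ?thesis by (simp add: bit_add_cancel)
  next
    case False
    then show ?thesis unfolding tv_def using j by simp
  qed
qed

definition step :: "nat \<Rightarrow> bit vec \<Rightarrow> bit vec \<Rightarrow> bool" where
  "step k c c' \<longleftrightarrow> dim_vec c = k \<and> (\<exists>x<k. \<exists>y<k. x \<noteq> y \<and> c' = tv k x y c)"

lemma step_sym: "symp (step k)"
  unfolding symp_def step_def
proof (intro allI impI)
  fix c c' assume "dim_vec c = k \<and> (\<exists>x<k. \<exists>y<k. x \<noteq> y \<and> c' = tv k x y c)"
  then obtain x y where c: "dim_vec c = k" and xy: "x < k" "y < k" "x \<noteq> y" and c': "c' = tv k x y c" by blast
  have e: "c = tv k x y c'" unfolding c' using tv_inv[OF xy(3) c xy(1)] by simp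
  have d: "dim_vec c' = k" unfolding c' by (rule tv_dim)
  show "dim_vec c' = k \<and> (\<exists>x<k. \<exists>y<k. x \<noteq> y \<and> c = tv k x y c')"
    using xy d e by blast
qed

lemma reach_unit:
  assumes a: "a < k"
  shows "dim_vec c = k \<Longrightarrow> c $ a = 1 \<Longrightarrow> card {j. j < k \<and> j \<noteq> a \<and> c $ j = 1} = m
     \<Longrightarrow> (step k)\<^sup>*\<^sup>* c (unit_vec k a)"
proof (induction m arbitrary: c)
  case 0
  have "{j. j < k \<and> j \<noteq> a \<and> c $ j = 1} = {}" using 0 by simp
  then have "c = unit_vec k a" using 0 a by (intro eq_vecI) auto
  then show ?case by simp
next
  case (Suc m)
  let ?S = "{j. j < k \<and> j \<noteq> a \<and> c $ j = 1}"
  have "?S \<noteq> {}"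
  proof
    assume "?S = {}"
    then have "card ?S = 0" by simp
    then show False using Suc.prems(3) by simp
  qed
  then obtain y where y: "y < k" "y \<noteq> a" "c $ y = 1" by blast
  define c' where "c' = tv k a y c"
  have dc': "dim_vec c' = k" unfolding c'_def by (rule tv_dim)
  have c'a: "c' $ a = 1" unfolding c'_def tv_def using a y Suc.prems by simp
  have c'y: "c' $ y = 0" unfolding c'_def tv_def using a y Suc.prems by (simp add: bit_add_self)
  have c'j: "c' $ j = c $ j" if "j < k" "j \<noteq> y" for j unfolding c'_def tv_def using that by simp
  have S': "{j. j < k \<and> j \<noteq> a \<and> c' $ j = 1} = ?S - {y}"
  proof -
    have "(j < k \<and> j \<noteq> a \<and> c' $ j = 1) \<longleftrightarrow> j \<in> ?S - {y}" for j
      by (cases "j = y") (use c'y c'j[of j] y in auto)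
    then show ?thesis by blast
  qed
  have "card (?S - {y}) = m" using Suc.prems(3) y by simp
  then have "(step k)\<^sup>*\<^sup>* c' (unit_vec k a)" using Suc.IH[OF dc' c'a] S' by simp
  moreover have "step k c c'" unfolding step_def c'_def using Suc.prems(1) a y by blast
  ultimately show ?case by (rule converse_rtranclp_into_rtranclp[rotated])
qed

lemma reach_e0:
  assumes c: "dim_vec c = k" and nz: "c \<noteq> 0\<^sub>v k"
  shows "(step k)\<^sup>*\<^sup>* c (unit_vec k 0)"
proof -
  obtain a where a: "a < k" "c $ a = 1"
  proof -
    have "\<exists>a<k. c $ a \<noteq> 0"
    proof (rule ccontr)
      assume "\<not> (\<exists>a<k. c $ a \<noteq> 0)"
      then have "c = 0\<^sub>v k" using c by (intro eq_vecI) auto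
      then show False using nz by simp
    qed
    then show ?thesis using that by auto
  qed
  have r1: "(step k)\<^sup>*\<^sup>* c (unit_vec k a)" using reach_unit[OF a(1) c a(2) refl] .
  show ?thesis
  proof (cases "a = 0")
    case True
    then show ?thesis using r1 by simp
  next
    case False
    have k0: "0 < k" using a by simp
    define u where "u = tv k a 0 (unit_vec k a)"
    have s1: "step k (unit_vec k a) u" unfolding step_def u_def
    proof (intro conjI exI)
      show "dim_vec (unit_vec k a :: bit vec) = k" by simp
    qed (use a False k0 in auto)
    have tu: "tv k 0 a u = unit_vec k 0"
      unfolding u_def tv_def using a False k0 by (intro eq_vecI) (auto simp: bit_add_self)
    have du: "dim_vec u = k" unfolding u_def by (rule tv_dim)
    have s2: "step k u (unit_vec k 0)" unfolding step_def
      using du a(1) k0 False tu[symmetric] by blast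
    show ?thesis using r1 s1 s2 by (meson rtranclp.rtrancl_into_rtrancl)
  qed
qed

lemma reach_all:
  assumes "dim_vec c = k" "c \<noteq> 0\<^sub>v k" "dim_vec c' = k" "c' \<noteq> 0\<^sub>v k"
  shows "(step k)\<^sup>*\<^sup>* c c'"
proof -
  have "(step k)\<^sup>*\<^sup>* c' (unit_vec k 0)" using reach_e0 assms(3,4) .
  then have "(step k)\<^sup>*\<^sup>* (unit_vec k 0) c'" using symp_rtranclp[OF step_sym] by (meson sympD)
  then show ?thesis using reach_e0[OF assms(1,2)] by (meson rtranclp_trans)
qed

lemma mono_along:
  assumes "\<And>c c'. step k c c' \<Longrightarrow> (g c :: nat) \<le> g c'"
  shows "(step k)\<^sup>*\<^sup>* c c' \<Longrightarrow> g c \<le> g c'"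
proof (induction rule: rtranclp_induct)
  case base then show ?case by simp
next
  case (step y z) then show ?case using assms[of y z] by simp
qed



theorem mainTheorem3:
  fixes n :: nat and H QX QZ :: "bit mat"
  assumes "stabilizer_code n H"
    and "logical_basis n H QX QZ"
    and "phantom_wrt n H QX QZ"
  shows "\<forall>w c c'. dim_vec c = num_logical n H \<and> c \<noteq> 0\<^sub>v (num_logical n H) \<and>
             dim_vec c' = num_logical n H \<and> c' \<noteq> 0\<^sub>v (num_logical n H) \<longrightarrow>
           card {v \<in> coset QX H c. weight_vec n v = w} = card {v \<in> coset QX H c'. weight_vec n v = w}
         \<and> card {v \<in> coset QZ H c. weight_vec n v = w} = card {v \<in> coset QZ H c'. weight_vec n v = w}"
proof (intro allI impI)
  fix w :: "nat \<times> nat \<times> nat" and c c' :: "bit vec"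
  define k where "k = num_logical n H"
  assume "dim_vec c = num_logical n H \<and> c \<noteq> 0\<^sub>v (num_logical n H) \<and>
             dim_vec c' = num_logical n H \<and> c' \<noteq> 0\<^sub>v (num_logical n H)"
  then have h: "dim_vec c = k" "c \<noteq> 0\<^sub>v k" "dim_vec c' = k" "c' \<noteq> 0\<^sub>v k" unfolding k_def by auto
  have Hd: "dim_col H = 2*n" using assms(1) unfolding stabilizer_code_def by simp
  have QXc: "QX \<in> carrier_mat k (2*n)" and QZc: "QZ \<in> carrier_mat k (2*n)"
    using assms(2) unfolding logical_basis_def Let_def k_def[symmetric] by auto
  have ph: "\<forall>a<k. \<forall>b<k. a \<noteq> b \<longrightarrow> (\<exists>pp. pp permutes {..<n} \<and>
              implements n H QX QZ (perm_mat n pp) (1\<^sub>m k + unit_mat k a b))"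
    using assms(3) unfolding phantom_wrt_def Let_def k_def[symmetric] .
  have stepX: "card {v \<in> coset QX H c1. weight_vec n v = w} \<le> card {v \<in> coset QX H c2. weight_vec n v = w}"
    if st: "step k c1 c2" for c1 c2
  proof -
    obtain x y where d: "dim_vec c1 = k" and xy: "x < k" "y < k" "x \<noteq> y" and c2: "c2 = tv k x y c1"
      using st unfolding step_def by blast
    obtain pp where p: "pp permutes {..<n}" and imp: "implements n H QX QZ (perm_mat n pp) (1\<^sub>m k + unit_mat k x y)"
      using ph xy by blast
    have Ac: "1\<^sub>m k + unit_mat k x y \<in> carrier_mat k k" and rsP: "rs (H * dsum (perm_mat n pp)) = rs H"
      and rows: "\<forall>i<k. row (QX * dsum (perm_mat n pp) - (1\<^sub>m k + unit_mat k x y) * QX) i \<in> rs H"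
      using imp unfolding implements_def Let_def k_def[symmetric] by auto
    have "card {v \<in> coset QX H c1. weight_vec n v = w}
        \<le> card {v \<in> coset QX H (transpose_mat (1\<^sub>m k + unit_mat k x y) *\<^sub>v c1). weight_vec n v = w}"
      by (rule coset_step[OF Hd QXc p rsP Ac rows d])
    then show ?thesis unfolding tvT[OF xy(1,2) d] c2 .
  qed
  have stepZ: "card {v \<in> coset QZ H c1. weight_vec n v = w} \<le> card {v \<in> coset QZ H c2. weight_vec n v = w}"
    if st: "step k c1 c2" for c1 c2
  proof -
    obtain x y where d: "dim_vec c1 = k" and xy: "x < k" "y < k" "x \<noteq> y" and c2: "c2 = tv k x y c1"
      using st unfolding step_def by blast
    obtain pp where p: "pp permutes {..<n}" and imp: "implements n H QX QZ (perm_mat n pp) (1\<^sub>m k + unit_mat k y x)"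
      using ph xy by blast
    have Ac: "1\<^sub>m k + unit_mat k y x \<in> carrier_mat k k" and rsP: "rs (H * dsum (perm_mat n pp)) = rs H"
      and ex: "\<exists>B. B \<in> carrier_mat k k \<and> (1\<^sub>m k + unit_mat k y x) * B = 1\<^sub>m k \<and> B * (1\<^sub>m k + unit_mat k y x) = 1\<^sub>m k \<and>
           (\<forall>i<k. row (QZ * dsum (perm_mat n pp) - transpose_mat B * QZ) i \<in> rs H)"
      using imp unfolding implements_def Let_def k_def[symmetric] by auto
    then obtain B where Bc: "B \<in> carrier_mat k k" and AB: "(1\<^sub>m k + unit_mat k y x) * B = 1\<^sub>m k"
      and rows: "\<forall>i<k. row (QZ * dsum (perm_mat n pp) - transpose_mat B * QZ) i \<in> rs H" by blast
    have BTc: "transpose_mat B \<in> carrier_mat k k" using Bc by simp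
    have "card {v \<in> coset QZ H c1. weight_vec n v = w}
        \<le> card {v \<in> coset QZ H (transpose_mat (transpose_mat B) *\<^sub>v c1). weight_vec n v = w}"
      by (rule coset_step[OF Hd QZc p rsP BTc rows d])
    moreover have "transpose_mat (transpose_mat B) *\<^sub>v c1 = c2"
    proof -
      have c1c: "c1 \<in> carrier_vec k" using d by (rule carrier_vecI)
      have dB: "dim_vec (B *\<^sub>v c1) = k" using Bc by simp
      have "(1\<^sub>m k + unit_mat k y x) *\<^sub>v (B *\<^sub>v c1) = ((1\<^sub>m k + unit_mat k y x) * B) *\<^sub>v c1"
        by (rule assoc_mult_mat_vec[OF Ac Bc c1c, symmetric])
      also have "\<dots> = c1" unfolding AB using c1c by simp
      finally have e: "tv k x y (B *\<^sub>v c1) = c1" using tvN[OF xy(2,1) xy(3)[symmetric] dB] by simp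
      have "B *\<^sub>v c1 = tv k x y (tv k x y (B *\<^sub>v c1))" using tv_inv[OF xy(3) dB xy(1)] by simp
      also have "\<dots> = tv k x y c1" unfolding e ..
      finally show ?thesis unfolding c2 by simp
    qed
    ultimately show ?thesis by simp
  qed
  have r1: "(step k)\<^sup>*\<^sup>* c c'" using reach_all[OF h] .
  have r2: "(step k)\<^sup>*\<^sup>* c' c" using reach_all[OF h(3,4,1,2)] .
  have X1: "card {v \<in> coset QX H c. weight_vec n v = w} \<le> card {v \<in> coset QX H c'. weight_vec n v = w}"
    by (rule mono_along[of k "\<lambda>c. card {v \<in> coset QX H c. weight_vec n v = w}", OF stepX r1])
  have X2: "card {v \<in> coset QX H c'. weight_vec n v = w} \<le> card {v \<in> coset QX H c. weight_vec n v = w}"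
    by (rule mono_along[of k "\<lambda>c. card {v \<in> coset QX H c. weight_vec n v = w}", OF stepX r2])
  have Z1: "card {v \<in> coset QZ H c. weight_vec n v = w} \<le> card {v \<in> coset QZ H c'. weight_vec n v = w}"
    by (rule mono_along[of k "\<lambda>c. card {v \<in> coset QZ H c. weight_vec n v = w}", OF stepZ r1])
  have Z2: "card {v \<in> coset QZ H c'. weight_vec n v = w} \<le> card {v \<in> coset QZ H c. weight_vec n v = w}"
    by (rule mono_along[of k "\<lambda>c. card {v \<in> coset QZ H c. weight_vec n v = w}", OF stepZ r2])
  show "card {v \<in> coset QX H c. weight_vec n v = w} = card {v \<in> coset QX H c'. weight_vec n v = w}
         \<and> card {v \<in> coset QZ H c. weight_vec n v = w} = card {v \<in> coset QZ H c'. weight_vec n v = w}"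
    using X1 X2 Z1 Z2 by simp
qed

end
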